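(* Let $k\geq 2$ be an integer and let $P$ be a finite poset of width $w$ that does not contain $\mathbf{k}+\mathbf{k}$ as an induced subposet. Then $P$ extends some interval order $Q$ of width at most $(2k-3)w$.
   Context: The width of a poset is the maximum size of an antichain. $\mathbf{k}+\mathbf{k}$ denotes the poset consisting of two disjoint chains $A,B$ with $|A|=|B|=k$ in which every element of $A$ is incomparable with every element of $B$; "$P$ does not contain $\mathbf{k}+\mathbf{k}$" means $P$ has no induced subposet isomorphic to it, i.e. there are no two disjoint chains of size $k$ in $P$ such that every element of one is incomparable to every element of the other. A poset $P$ extends a poset $Q$ if they have the same ground set and $u<v$ in $Q$ implies $u<v$ in $P$. A poset is an interval order if there is an assignment of closed real intervals $I(u)$ to its elements such that $u<v$ if and only if $I(u)=[a,b]$, $I(v)=[c,d]$ with $b<c$. *)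

theory Defs
  imports Complex_Main
begin

definition strict_poset :: "'a set \<Rightarrow> ('a \<Rightarrow> 'a \<Rightarrow> bool) \<Rightarrow> bool" where
  "strict_poset X lt \<longleftrightarrow>
     (\<forall>x\<in>X. \<not> lt x x) \<and>
     (\<forall>x\<in>X. \<forall>y\<in>X. \<forall>z\<in>X. lt x y \<longrightarrow> lt y z \<longrightarrow> lt x z)"

definition comparable :: "('a \<Rightarrow> 'a \<Rightarrow> bool) \<Rightarrow> 'a \<Rightarrow> 'a \<Rightarrow> bool" where
  "comparable lt x y \<longleftrightarrow> x = y \<or> lt x y \<or> lt y x"

definition is_chain :: "('a \<Rightarrow> 'a \<Rightarrow> bool) \<Rightarrow> 'a set \<Rightarrow> bool" where
  "is_chain lt C \<longleftrightarrow> (\<forall>x\<in>C. \<forall>y\<in>C. comparable lt x y)"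

definition is_antichain :: "('a \<Rightarrow> 'a \<Rightarrow> bool) \<Rightarrow> 'a set \<Rightarrow> bool" where
  "is_antichain lt A \<longleftrightarrow> (\<forall>x\<in>A. \<forall>y\<in>A. x \<noteq> y \<longrightarrow> \<not> comparable lt x y)"

definition width :: "'a set \<Rightarrow> ('a \<Rightarrow> 'a \<Rightarrow> bool) \<Rightarrow> nat" where
  "width X lt = Max (card ` {A. A \<subseteq> X \<and> is_antichain lt A})"

definition contains_k_plus_k :: "nat \<Rightarrow> 'a set \<Rightarrow> ('a \<Rightarrow> 'a \<Rightarrow> bool) \<Rightarrow> bool" where
  "contains_k_plus_k k X lt \<longleftrightarrow>
     (\<exists>A B. A \<subseteq> X \<and> B \<subseteq> X \<and> A \<inter> B = {} \<and> card A = k \<and> card B = k \<and>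
        is_chain lt A \<and> is_chain lt B \<and>
        (\<forall>a\<in>A. \<forall>b\<in>B. \<not> comparable lt a b))"

definition extends :: "'a set \<Rightarrow> ('a \<Rightarrow> 'a \<Rightarrow> bool) \<Rightarrow> ('a \<Rightarrow> 'a \<Rightarrow> bool) \<Rightarrow> bool" where
  "extends X ltP ltQ \<longleftrightarrow> (\<forall>u\<in>X. \<forall>v\<in>X. ltQ u v \<longrightarrow> ltP u v)"

definition interval_order :: "'a set \<Rightarrow> ('a \<Rightarrow> 'a \<Rightarrow> bool) \<Rightarrow> bool" where
  "interval_order X lt \<longleftrightarrow> strict_poset X lt \<and>
     (\<exists>I :: 'a \<Rightarrow> real \<times> real. (\<forall>u\<in>X. fst (I u) \<le> snd (I u)) \<and>
        (\<forall>u\<in>X. \<forall>v\<in>X. lt u v \<longleftrightarrow> snd (I u) < fst (I v)))"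

end

theory Submission
  imports Defs
begin

locale kkf =
  fixes X :: "'a set" and lt :: "'a \<Rightarrow> 'a \<Rightarrow> bool" and k :: nat
  assumes fin: "finite X" and sp: "strict_poset X lt" and k2: "k \<ge> 2"
    and nokk: "\<not> contains_k_plus_k k X lt"
begin

lemma irr: "x \<in> X \<Longrightarrow> \<not> lt x x" using sp unfolding strict_poset_def by blast
lemma tr: "x \<in> X \<Longrightarrow> y \<in> X \<Longrightarrow> z \<in> X \<Longrightarrow> lt x y \<Longrightarrow> lt y z \<Longrightarrow> lt x z"
  using sp unfolding strict_poset_def by blast
lemma asy: "x \<in> X \<Longrightarrow> y \<in> X \<Longrightarrow> lt x y \<Longrightarrow> \<not> lt y x"
  using irr tr by blast

definition rk :: "'a set \<Rightarrow> 'a \<Rightarrow> nat" where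
  "rk C c = card {c'\<in>C. lt c' c}"

lemma rk_mono:
  assumes "C \<subseteq> X" "finite C" "c \<in> C" "c' \<in> C" "lt c c'"
  shows "rk C c < rk C c'"
proof -
  have "{c''\<in>C. lt c'' c} \<subset> {c''\<in>C. lt c'' c'}"
  proof
    show "{c''\<in>C. lt c'' c} \<subseteq> {c''\<in>C. lt c'' c'}" using assms tr by blast
    show "{c''\<in>C. lt c'' c} \<noteq> {c''\<in>C. lt c'' c'}" using assms irr by blast
  qed
  then show ?thesis unfolding rk_def by (intro psubset_card_mono) (use assms in auto)
qed

lemma rk_less_iff:
  assumes "C \<subseteq> X" "finite C" "is_chain lt C" "c \<in> C" "c' \<in> C"
  shows "lt c c' \<longleftrightarrow> rk C c < rk C c'"
  using assms rk_mono[of C c c'] rk_mono[of C c' c] unfolding is_chain_def comparable_def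
  by (metis less_asym less_irrefl)

lemma rk_inj:
  assumes "C \<subseteq> X" "finite C" "is_chain lt C"
  shows "inj_on (rk C) C"
  using assms rk_mono unfolding inj_on_def is_chain_def comparable_def
  by (metis less_irrefl)

lemma rk_bound:
  assumes "C \<subseteq> X" "finite C" "c \<in> C"
  shows "rk C c < card C"
proof -
  have "{c'\<in>C. lt c' c} \<subseteq> C - {c}" using assms irr by blast
  then have "rk C c \<le> card (C - {c})" unfolding rk_def using assms by (intro card_mono) auto
  also have "\<dots> < card C" using assms by (intro card_Diff1_less)
  finally show ?thesis .
qed

lemma rk_image:
  assumes "C \<subseteq> X" "finite C" "is_chain lt C"
  shows "rk C ` C = {..<card C}"
proof -
  have s: "rk C ` C \<subseteq> {..<card C}" using rk_bound assms by auto
  have "card (rk C ` C) = card C" using card_image rk_inj assms by blast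
  then show ?thesis using s by (intro card_subset_eq) auto
qed

lemma card_rk_filter:
  assumes "C \<subseteq> X" "finite C" "is_chain lt C"
  shows "card {c\<in>C. P (rk C c)} = card {i\<in>{..<card C}. P i}"
proof -
  have "rk C ` {c\<in>C. P (rk C c)} = {i\<in>{..<card C}. P i}"
    using rk_image[OF assms] by auto
  moreover have "inj_on (rk C) {c\<in>C. P (rk C c)}"
    using rk_inj[OF assms] by (rule inj_on_subset) auto
  ultimately show ?thesis using card_image by metis
qed

lemma rk_exists:
  assumes "C \<subseteq> X" "finite C" "is_chain lt C" "i < card C"
  shows "\<exists>c\<in>C. rk C c = i"
  using rk_image[OF assms(1-3)] assms(4) by (metis imageE lessThan_iff)

definition Dn :: "'a \<Rightarrow> 'a set" where "Dn u = {z\<in>X. lt z u}"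

definition Kset :: "'a \<Rightarrow> 'a set" where
  "Kset u = {z\<in>X. \<exists>S. S \<subseteq> X \<and> k \<le> card S \<and> is_chain lt S \<and> z \<in> S \<and> u \<in> S \<and>
      (\<forall>s\<in>S. (lt z s \<or> z = s) \<and> (lt s u \<or> s = u))}"

lemma K_sub: "Kset u \<subseteq> X" unfolding Kset_def by auto

lemma K_below: "z \<in> Kset u \<Longrightarrow> lt z u \<or> z = u" unfolding Kset_def by blast

lemma K_mono:
  assumes "u \<in> X" "v \<in> X" "lt u v"
  shows "Kset u \<subseteq> Kset v"
proof
  fix z assume "z \<in> Kset u"
  then obtain S where S: "S \<subseteq> X" "k \<le> card S" "is_chain lt S" "z \<in> S" "u \<in> S"
      "\<forall>s\<in>S. (lt z s \<or> z = s) \<and> (lt s u \<or> s = u)" and zX: "z \<in> X"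
    unfolding Kset_def by blast
  have fS: "finite S" using S(1) fin finite_subset by blast
  have sv: "\<forall>s\<in>S. lt s v" using S(1,6) assms tr by blast
  have zv: "lt z v" using sv S(4) by blast
  have "card S \<le> card (insert v S)" using fS by (simp add: card_insert_le)
  then have "k \<le> card (insert v S)" using S(2) by linarith
  moreover have "is_chain lt (insert v S)" using S(3) sv unfolding is_chain_def comparable_def by blast
  moreover have "\<forall>s\<in>insert v S. (lt z s \<or> z = s) \<and> (lt s v \<or> s = v)" using S(6) sv zv by blast
  ultimately show "z \<in> Kset v" unfolding Kset_def using S zX assms by blast
qed

lemma key:
  assumes C: "C \<subseteq> X" "is_chain lt C" "card C = 2*k-2"
    and x: "x \<in> X" "\<forall>c\<in>C. \<not> comparable lt x c"
    and t: "t \<in> C" "rk C t = 2*k-3"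
  shows "card (Kset x) < card (Kset t)"
proof -
  have fC: "finite C" using C(1) fin finite_subset by blast
  note rkf = card_rk_filter[OF C(1) fC C(2)]
  note rkl = rk_less_iff[OF C(1) fC C(2)]
  note rki = rk_inj[OF C(1) fC C(2)]
  have "k - 1 < card C" using C(3) k2 by linarith
  then obtain b where b: "b \<in> C" "rk C b = k - 1" using rk_exists[OF C(1) fC C(2), of "k-1"] by auto
  define B where "B = {c\<in>C. rk C c < k}"
  have "card B = card {i\<in>{..<card C}. i < k}" unfolding B_def by (rule rkf)
  also have "{i\<in>{..<card C}. i < k} = {..<k}" using C(3) k2 by auto
  finally have cardB: "card B = k" by simp
  have Bsub: "B \<subseteq> C" unfolding B_def by auto
  have B_le_b: "lt c b \<or> c = b" if "c \<in> B" for c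
  proof -
    have c: "c \<in> C" "rk C c < k" using that unfolding B_def by auto
    show ?thesis
    proof (cases "rk C c < rk C b")
      case True then show ?thesis using rkl c b by blast
    next
      case False then have "rk C c = rk C b" using c b by auto
      then show ?thesis using rki c b unfolding inj_on_def by blast
    qed
  qed
  have le_t: "lt c t \<or> c = t" if "c \<in> C" for c
  proof (cases "rk C c < rk C t")
    case True then show ?thesis using rkl that t by blast
  next
    case False then have "rk C c = rk C t" using rk_bound[OF C(1) fC that] C(3) t by auto
    then show ?thesis using rki that t unfolding inj_on_def by blast
  qed
  have step1: "Kset x \<subseteq> Dn b"
  proof
    fix z assume zK: "z \<in> Kset x"
    then obtain S where S: "S \<subseteq> X" "k \<le> card S" "is_chain lt S" "z \<in> S" "x \<in> S"
      "\<forall>s\<in>S. (lt z s \<or> z = s) \<and> (lt s x \<or> s = x)" and zX: "z \<in> X"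
      unfolding Kset_def by blast
    show "z \<in> Dn b"
    proof (rule ccontr)
      assume nz: "z \<notin> Dn b"
      then have nzb: "\<not> lt z b" using zX unfolding Dn_def by blast
      obtain S' where S': "S' \<subseteq> S" "card S' = k" using obtain_subset_with_card_n[OF S(2)] by metis
      have inc: "\<not> comparable lt s c" if "s \<in> S" "c \<in> B" for s c
      proof
        assume cmp: "comparable lt s c"
        have cC: "c \<in> C" using that Bsub by auto
        have sx: "lt s x \<or> s = x" using S(6) that by blast
        have zs: "lt z s \<or> z = s" using S(6) that by blast
        have cb: "lt c b \<or> c = b" using B_le_b that by blast
        have X3: "s \<in> X" "c \<in> X" "b \<in> X" using that S(1) cC C(1) b by auto
        consider "s = c" | "lt s c" | "lt c s" using cmp unfolding comparable_def by blast
        then show False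
        proof cases
          case 1 then show ?thesis using sx x cC unfolding comparable_def by blast
        next
          case 2
          have "lt s b" using 2 cb tr X3 by blast
          then have "lt z b" using zs tr X3 zX by blast
          then show ?thesis using nzb by blast
        next
          case 3
          then have "lt c x" using sx tr X3 x by blast
          then show ?thesis using x cC unfolding comparable_def by blast
        qed
      qed
      have "contains_k_plus_k k X lt"
        unfolding contains_k_plus_k_def
      proof (intro exI conjI)
        show "S' \<subseteq> X" using S' S by auto
        show "B \<subseteq> X" using Bsub C by auto
        show "S' \<inter> B = {}" using inc S' unfolding comparable_def by blast
        show "card S' = k" by (rule S'(2))
        show "card B = k" by (rule cardB)
        show "is_chain lt S'" using S(3) S' unfolding is_chain_def by blast
        show "is_chain lt B" using C(2) Bsub unfolding is_chain_def by blast
        show "\<forall>a\<in>S'. \<forall>b\<in>B. \<not> comparable lt a b" using inc S' by blast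
      qed
      then show False using nokk by blast
    qed
  qed
  have step2: "Dn b \<subseteq> Kset t"
  proof
    fix z assume "z \<in> Dn b"
    then have zX: "z \<in> X" and zb: "lt z b" unfolding Dn_def by auto
    define U where "U = {c\<in>C. k - 1 \<le> rk C c}"
    have "card U = card {i\<in>{..<card C}. k - 1 \<le> i}" unfolding U_def by (rule rkf)
    also have "{i\<in>{..<card C}. k - 1 \<le> i} = {k-1..<2*k-2}" using C(3) by auto
    finally have cardU: "card U = k - 1" by simp
    have bU: "lt b c \<or> b = c" if "c \<in> U" for c
    proof (cases "rk C b < rk C c")
      case True then show ?thesis using rkl that b unfolding U_def by blast
    next
      case False then have "rk C c = rk C b" using that b unfolding U_def by auto
      then show ?thesis using rki that b unfolding inj_on_def U_def by blast
    qed
    have bX: "b \<in> X" using b C by auto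
    have zU: "lt z c" if "c \<in> U" for c
      using bU[OF that] zb tr zX bX that C(1) unfolding U_def by blast
    have znU: "z \<notin> U" using zU zX irr by blast
    have fU: "finite U" using fC unfolding U_def by auto
    have "card (insert z U) = k" using cardU znU fU k2 by simp
    moreover have "insert z U \<subseteq> X" using zX C unfolding U_def by auto
    moreover have "is_chain lt (insert z U)"
      using C(2) zU unfolding is_chain_def comparable_def U_def by blast
    moreover have "t \<in> U" using t C(3) k2 unfolding U_def by auto
    moreover have "\<forall>s\<in>insert z U. (lt z s \<or> z = s) \<and> (lt s t \<or> s = t)"
    proof
      fix s assume s: "s \<in> insert z U"
      show "(lt z s \<or> z = s) \<and> (lt s t \<or> s = t)"
      proof (cases "s = z")
        case True
        have "lt b t \<or> b = t" using le_t b by blast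
        then have "lt z t" using zb tr zX bX t C(1) by blast
        then show ?thesis using True by blast
      next
        case False then have "s \<in> U" using s by blast
        then show ?thesis using zU le_t unfolding U_def by blast
      qed
    qed
    ultimately show "z \<in> Kset t" unfolding Kset_def using zX by blast
  qed
  obtain c0 where c0: "c0 \<in> C" "rk C c0 = 0" using rk_exists[OF C(1) fC C(2), of 0] C(3) k2 by auto
  have "lt c0 b" using rkl c0 b k2 by auto
  then have c0D: "c0 \<in> Dn b" using c0 C unfolding Dn_def by auto
  have c0K: "c0 \<notin> Kset x" using K_below x c0 unfolding comparable_def by blast
  have "Kset x \<subset> Kset t" using step1 step2 c0D c0K by blast
  moreover have "finite (Kset t)" using K_sub fin finite_subset by blast
  ultimately show ?thesis by (rule psubset_card_mono[rotated])
qed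

lemma rk_le:
  assumes "C \<subseteq> X" "is_chain lt C" "c \<in> C" "d \<in> C" "rk C c \<le> rk C d"
  shows "lt c d \<or> c = d"
proof -
  have fC: "finite C" using assms(1) fin finite_subset by blast
  show ?thesis
  proof (cases "rk C c < rk C d")
    case True then show ?thesis using rk_less_iff[OF assms(1) fC assms(2)] assms by blast
  next
    case False then have "rk C c = rk C d" using assms by auto
    then show ?thesis using rk_inj[OF assms(1) fC assms(2)] assms unfolding inj_on_def by blast
  qed
qed

definition NN :: nat where "NN = card X + 1"
definition LL :: "'a \<Rightarrow> real" where "LL u = real (NN * card (Kset u) + card (Dn u))"
definition RR :: "'a \<Rightarrow> real" where "RR u = Max (LL ` {x\<in>X. \<not> lt u x})"
definition qlt :: "'a \<Rightarrow> 'a \<Rightarrow> bool" where "qlt u v \<longleftrightarrow> RR u < LL v"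

lemma LL_mono:
  assumes "u \<in> X" "v \<in> X" "lt u v"
  shows "LL u < LL v"
proof -
  have "card (Kset u) \<le> card (Kset v)"
    using K_mono[OF assms] K_sub fin finite_subset card_mono by metis
  moreover have "card (Dn u) < card (Dn v)"
  proof (rule psubset_card_mono)
    show "finite (Dn v)" unfolding Dn_def using fin by auto
    show "Dn u \<subset> Dn v" unfolding Dn_def using assms tr irr by blast
  qed
  ultimately have "NN * card (Kset u) + card (Dn u) < NN * card (Kset v) + card (Dn v)"
    by (simp add: add_le_less_mono)
  then show ?thesis unfolding LL_def by (simp only: of_nat_less_iff)
qed

lemma LL_K:
  assumes "LL t \<le> LL x"
  shows "card (Kset t) \<le> card (Kset x)"
proof (rule ccontr)
  assume "\<not> ?thesis"
  then have "card (Kset x) + 1 \<le> card (Kset t)" by simp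
  then have a: "NN * (card (Kset x) + 1) \<le> NN * card (Kset t)" by (rule mult_le_mono2)
  have "card (Dn x) \<le> card X" unfolding Dn_def using fin by (intro card_mono) auto
  then have "card (Dn x) < NN" unfolding NN_def by simp
  then have "NN * card (Kset x) + card (Dn x) < NN * card (Kset t)" using a
    by (simp add: algebra_simps)
  then have "NN * card (Kset x) + card (Dn x) < NN * card (Kset t) + card (Dn t)" by linarith
  then have "LL x < LL t" unfolding LL_def by (simp only: of_nat_less_iff)
  then show False using assms by simp
qed

lemma RR_ge: "u \<in> X \<Longrightarrow> LL u \<le> RR u"
  unfolding RR_def using fin irr by (intro Max_ge) auto

lemma RR_less: "u \<in> X \<Longrightarrow> RR u < LL v \<longleftrightarrow> (\<forall>x\<in>X. \<not> lt u x \<longrightarrow> LL x < LL v)"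
  unfolding RR_def using fin irr by (subst Max_less_iff) auto

lemma qlt_ext: "u \<in> X \<Longrightarrow> v \<in> X \<Longrightarrow> qlt u v \<Longrightarrow> lt u v"
  unfolding qlt_def using RR_less by auto

lemma interval: "interval_order X qlt"
  unfolding interval_order_def
proof
  show "strict_poset X qlt" unfolding strict_poset_def qlt_def
    using RR_ge by (meson le_less_trans less_le_not_le order.strict_trans)
  show "\<exists>I :: 'a \<Rightarrow> real \<times> real. (\<forall>u\<in>X. fst (I u) \<le> snd (I u)) \<and>
        (\<forall>u\<in>X. \<forall>v\<in>X. qlt u v \<longleftrightarrow> snd (I u) < fst (I v))"
    by (rule exI[of _ "\<lambda>u. (LL u, RR u)"]) (auto simp: RR_ge qlt_def)
qed

lemma no_long_chain:
  assumes A: "A \<subseteq> X" "is_antichain qlt A" and C: "C \<subseteq> A" "is_chain lt C" "card C = 2*k-2"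
  shows False
proof -
  have CX: "C \<subseteq> X" using A C by auto
  have fC: "finite C" using CX fin finite_subset by blast
  have "2*k-3 < card C" using C k2 by linarith
  then obtain t where t: "t \<in> C" "rk C t = 2*k-3" using rk_exists[OF CX fC C(2)] by blast
  have "0 < card C" using C k2 by linarith
  then obtain c0 where c0: "c0 \<in> C" "rk C c0 = 0" using rk_exists[OF CX fC C(2)] by blast
  have "lt c0 t" using rk_less_iff[OF CX fC C(2) c0(1) t(1)] c0 t k2 by linarith
  moreover have "c0 \<noteq> t" using c0 t k2 by auto
  ultimately have "\<not> qlt c0 t" using A c0 t C unfolding is_antichain_def comparable_def by blast
  then obtain x where x: "x \<in> X" "\<not> lt c0 x" "LL t \<le> LL x"
    unfolding qlt_def using RR_less[of c0 t] c0 CX by force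
  have ct: "lt c t \<or> c = t" if "c \<in> C" for c
    using rk_le[OF CX C(2) that t(1)] rk_bound[OF CX fC that] t C(3) by linarith
  have c0c: "lt c0 c \<or> c0 = c" if "c \<in> C" for c
    using rk_le[OF CX C(2) c0(1) that] c0 by simp
  have LLct: "LL c \<le> LL t" if "c \<in> C" for c
    using ct[OF that] LL_mono that t CX by fastforce
  have inc: "\<forall>c\<in>C. \<not> comparable lt x c"
  proof (intro ballI notI)
    fix c assume c: "c \<in> C" and cmp: "comparable lt x c"
    have cX: "c \<in> X" using c CX by auto
    consider "x = c" | "lt x c" | "lt c x" using cmp unfolding comparable_def by blast
    then show False
    proof cases
      case 1
      show False
      proof (cases "c = t")
        case True then show ?thesis using 1 \<open>lt c0 t\<close> x by simp
      next
        case False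
        then have "LL c < LL t" using ct c LL_mono cX t CX by blast
        then show ?thesis using 1 x by simp
      qed
    next
      case 2
      then have "LL x < LL c" using LL_mono x cX by blast
      moreover have "LL c \<le> LL t" using LLct c by blast
      ultimately show ?thesis using x by simp
    next
      case 3
      then have "lt c0 x" using c0c[OF c] tr c0 CX cX x by blast
      then show ?thesis using x by simp
    qed
  qed
  have "card (Kset x) < card (Kset t)" using key[OF CX C(2) C(3) x(1) inc t] .
  moreover have "card (Kset t) \<le> card (Kset x)" using LL_K x by blast
  ultimately show False by simp
qed

lemma width_fin: "finite {B. B \<subseteq> X \<and> is_antichain r B}"
  by (rule finite_subset[of _ "Pow X"]) (use fin in auto)

lemma antichain_le_width:
  assumes "B \<subseteq> X" "is_antichain lt B" shows "card B \<le> width X lt"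
  unfolding width_def using assms width_fin by (intro Max_ge) auto

lemma Q_antichain_bound:
  assumes A: "A \<subseteq> X" "is_antichain qlt A"
  shows "card A \<le> (2*k-3) * width X lt"
proof -
  have fA: "finite A" using A fin finite_subset by blast
  define chs where "chs a = {S. S \<subseteq> A \<and> is_chain lt S \<and> a \<in> S \<and> (\<forall>s\<in>S. lt s a \<or> s = a)}" for a
  define rho where "rho a = Max (card ` chs a)" for a
  have fchs: "finite (chs a)" for a unfolding chs_def by (rule finite_subset[of _ "Pow A"]) (use fA in auto)
  have single: "{a} \<in> chs a" if "a \<in> A" for a
    unfolding chs_def is_chain_def comparable_def using that by auto
  have bnd: "card S \<le> 2*k-3" if "S \<in> chs a" for S a
  proof (rule ccontr)
    assume "\<not> ?thesis"
    then have "2*k-2 \<le> card S" by linarith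
    then obtain T where T: "T \<subseteq> S" "card T = 2*k-2" using obtain_subset_with_card_n by metis
    have "T \<subseteq> A" "is_chain lt T" using T that unfolding chs_def is_chain_def by blast+
    then show False using no_long_chain[OF A _ _ T(2)] by blast
  qed
  have rho_ge: "1 \<le> rho a" if "a \<in> A" for a
  proof -
    have "card {a} \<in> card ` chs a" using single[OF that] by (rule imageI)
    then have "card {a} \<le> rho a" unfolding rho_def using fchs by (intro Max_ge) auto
    then show ?thesis by simp
  qed
  have rho_le: "rho a \<le> 2*k-3" if "a \<in> A" for a
    unfolding rho_def using fchs single[OF that] bnd by (subst Max_le_iff) auto
  have rho_mono: "rho a < rho a'" if "a \<in> A" "a' \<in> A" "lt a a'" for a a'
  proof -
    have "rho a \<in> card ` chs a" unfolding rho_def using fchs single[OF that(1)] by (intro Max_in) auto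
    then obtain S where S: "S \<in> chs a" "card S = rho a" by auto
    have aX: "a \<in> X" "a' \<in> X" using that A by auto
    have Ss: "S \<subseteq> A" "is_chain lt S" "a \<in> S" "\<forall>s\<in>S. lt s a \<or> s = a" using S unfolding chs_def by auto
    have sa': "\<forall>s\<in>S. lt s a'" using Ss that tr A aX by blast
    have nS: "a' \<notin> S" using sa' irr aX by blast
    have fS: "finite S" using Ss fA finite_subset by blast
    have "insert a' S \<in> chs a'" unfolding chs_def
      using Ss sa' that unfolding is_chain_def comparable_def by blast
    then have "card (insert a' S) \<le> rho a'" unfolding rho_def using fchs by (intro Max_ge) auto
    then show ?thesis using nS fS S by simp
  qed
  define F where "F j = {a\<in>A. rho a = j}" for j
  have Fanti: "is_antichain lt (F j)" for j
    unfolding is_antichain_def comparable_def F_def using rho_mono by fastforce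
  have Fw: "card (F j) \<le> width X lt" for j
    using antichain_le_width[OF _ Fanti] A unfolding F_def by auto
  have "A = (\<Union>j\<in>{1..2*k-3}. F j)" unfolding F_def using rho_ge rho_le by auto
  then have "card A \<le> (\<Sum>j\<in>{1..2*k-3}. card (F j))" using card_UN_le[of "{1..2*k-3}" F] by simp
  also have "\<dots> \<le> card {1..2*k-3} * width X lt" using Fw sum_bounded_above[of "{1..2*k-3}" "\<lambda>j. card (F j)" "width X lt"] by simp
  finally show ?thesis by simp
qed

lemma main_thm: "\<exists>Q. interval_order X Q \<and> extends X lt Q \<and> width X Q \<le> (2 * k - 3) * width X lt"
proof (intro exI conjI)
  show "interval_order X qlt" by (rule interval)
  show "extends X lt qlt" unfolding extends_def using qlt_ext by blast
  have "width X qlt \<in> card ` {A. A \<subseteq> X \<and> is_antichain qlt A}"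
    unfolding width_def using width_fin by (intro Max_in) (auto intro: exI[of _ "{}"] simp: is_antichain_def)
  then obtain A where "A \<subseteq> X" "is_antichain qlt A" "width X qlt = card A" by auto
  then show "width X qlt \<le> (2 * k - 3) * width X lt" using Q_antichain_bound by simp
qed

end

theorem theorem1:
  fixes X :: "'a set" and ltP :: "'a \<Rightarrow> 'a \<Rightarrow> bool" and k :: nat
  assumes "k \<ge> 2"
    and "finite X"
    and "strict_poset X ltP"
    and "\<not> contains_k_plus_k k X ltP"
  shows "\<exists>ltQ. interval_order X ltQ \<and> extends X ltP ltQ \<and>
           width X ltQ \<le> (2 * k - 3) * width X ltP"
proof -
  interpret kkf X ltP k using assms by unfold_locales auto
  show ?thesis by (rule main_thm)
qed

end
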